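(* Let $\alpha,\beta,\lambda\in\mathbb{R}$ with $\beta\neq 0$, let $J_1^{**}=\mathrm{diag}(\alpha+\beta i,\ \alpha-\beta i,\ \lambda)$ and $h>0$. Define $$T_1=2\beta\big(e^{\alpha h}\cos(\beta h)-e^{\lambda h}\big)+2e^{\alpha h}(\lambda-\alpha)\sin(\beta h),$$ $$\begin{aligned}T_2={}&\alpha\big(1-e^{\alpha h}\cos(\beta h)\big)\big(-2e^{\alpha h}\sin(\beta h)\big)+\alpha e^{\alpha h}\sin(\beta h)\big(2e^{\lambda h}-2e^{\alpha h}\cos(\beta h)\big)\\&+\beta\big(1-e^{\alpha h}\cos(\beta h)\big)\big(2e^{\alpha h}\cos(\beta h)-2e^{\lambda h}\big)+\beta e^{\alpha h}\sin(\beta h)\big(-2e^{\alpha h}\sin(\beta h)\big)\\&+\lambda\big(1-e^{\lambda h}\big)\big(2e^{\alpha h}\sin(\beta h)\big),\end{aligned}$$ $$T_3=-2\beta+2\alpha e^{\alpha h}\sin(\beta h)+2\beta e^{\alpha h}\cos(\beta h),$$ and $$\theta=\frac{T_1}{T_2},\qquad \phi=\frac{2e^{\alpha h}\sin(\beta h)}{2\beta+T_3\theta},\qquad \psi=e^{\lambda h}-\phi\lambda\big(\theta e^{\lambda h}+1-\theta\big).$$ Then (whenever these expressions are defined and the scheme is uniquely solvable for $\mathbf{x}_{k+1}$) the difference scheme $$\frac{\mathbf{x}_{k+1}-\psi\mathbf{x}_k}{\phi}=J_1^{**}\big[\theta\mathbf{x}_{k+1}+(1-\theta)\mathbf{x}_k\big]$$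 is exact for the system $\mathbf{x}'=J_1^{**}\mathbf{x}$.
   Context: A one-step difference scheme with step size $h>0$ for $\mathbf{x}'=M\mathbf{x}$ is called exact if for every initial vector $\mathbf{x}_0$ the sequence $(\mathbf{x}_k)$ it generates satisfies $\mathbf{x}_k=\mathbf{x}(kh)$ for all $k\ge 0$, where $\mathbf{x}(t)$ solves $\mathbf{x}'=M\mathbf{x}$, $\mathbf{x}(0)=\mathbf{x}_0$. *)

theory Defs
  imports "HOL-Analysis.Analysis"
begin

definition J1 :: "real \<Rightarrow> real \<Rightarrow> real \<Rightarrow> complex^3^3" where
  "J1 \<alpha> \<beta> l = (\<chi> i j. if i = j then
       (if i = 1 then Complex \<alpha> \<beta> else if i = 2 then Complex \<alpha> (-\<beta>) else complex_of_real l)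
     else 0)"

definition T1 :: "real \<Rightarrow> real \<Rightarrow> real \<Rightarrow> real \<Rightarrow> real" where
  "T1 \<alpha> \<beta> l h = 2*\<beta>*(exp (\<alpha>*h) * cos (\<beta>*h) - exp (l*h)) + 2* exp (\<alpha>*h)*(l - \<alpha>)* sin (\<beta>*h)"

definition T2 :: "real \<Rightarrow> real \<Rightarrow> real \<Rightarrow> real \<Rightarrow> real" where
  "T2 \<alpha> \<beta> l h =
     \<alpha>*(1 - exp (\<alpha>*h)* cos (\<beta>*h))*(-2* exp (\<alpha>*h)* sin (\<beta>*h))
   + \<alpha>* exp (\<alpha>*h)* sin (\<beta>*h)*(2* exp (l*h) - 2* exp (\<alpha>*h)* cos (\<beta>*h))
   + \<beta>*(1 - exp (\<alpha>*h)* cos (\<beta>*h))*(2* exp (\<alpha>*h)* cos (\<beta>*h) - 2* exp (l*h))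
   + \<beta>* exp (\<alpha>*h)* sin (\<beta>*h)*(-2* exp (\<alpha>*h)* sin (\<beta>*h))
   + l*(1 - exp (l*h))*(2* exp (\<alpha>*h)* sin (\<beta>*h))"

definition T3 :: "real \<Rightarrow> real \<Rightarrow> real \<Rightarrow> real \<Rightarrow> real" where
  "T3 \<alpha> \<beta> l h = -2*\<beta> + 2*\<alpha>* exp (\<alpha>*h)* sin (\<beta>*h) + 2*\<beta>* exp (\<alpha>*h)* cos (\<beta>*h)"

definition theta :: "real \<Rightarrow> real \<Rightarrow> real \<Rightarrow> real \<Rightarrow> real" where
  "theta \<alpha> \<beta> l h = T1 \<alpha> \<beta> l h / T2 \<alpha> \<beta> l h"

definition phi :: "real \<Rightarrow> real \<Rightarrow> real \<Rightarrow> real \<Rightarrow> real" where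
  "phi \<alpha> \<beta> l h = 2* exp (\<alpha>*h)* sin (\<beta>*h) / (2*\<beta> + T3 \<alpha> \<beta> l h * theta \<alpha> \<beta> l h)"

definition psi :: "real \<Rightarrow> real \<Rightarrow> real \<Rightarrow> real \<Rightarrow> real" where
  "psi \<alpha> \<beta> l h = exp (l*h) - phi \<alpha> \<beta> l h * l *
     (theta \<alpha> \<beta> l h * exp (l*h) + 1 - theta \<alpha> \<beta> l h)"

definition scheme_step :: "complex^3^3 \<Rightarrow> real \<Rightarrow> real \<Rightarrow> real \<Rightarrow> complex^3 \<Rightarrow> complex^3 \<Rightarrow> bool" where
  "scheme_step M \<theta> \<phi> \<psi> x x' \<longleftrightarrow>
     (1/\<phi>) *\<^sub>R (x' - \<psi> *\<^sub>R x) = M *v (\<theta> *\<^sub>R x' + (1 - \<theta>) *\<^sub>R x)"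

definition exact_scheme :: "complex^3^3 \<Rightarrow> real \<Rightarrow> real \<Rightarrow> real \<Rightarrow> real \<Rightarrow> bool" where
  "exact_scheme M h \<theta> \<phi> \<psi> \<longleftrightarrow>
     (\<forall>xs :: nat \<Rightarrow> complex^3. \<forall>X :: real \<Rightarrow> complex^3.
        (\<forall>k. scheme_step M \<theta> \<phi> \<psi> (xs k) (xs (Suc k))) \<longrightarrow>
        X 0 = xs 0 \<longrightarrow>
        (\<forall>t. (X has_vector_derivative (M *v X t)) (at t)) \<longrightarrow>
        (\<forall>k. xs k = X (real k * h)))"

end

theory Submission
  imports Defs
begin

lemma alg:
  fixes a b l E C S L T1 T2 T3 p t :: real
  assumes h1: "T1 = 2*b*(E*C - L) + 2*E*(l - a)*S"
  and h2: "T2 = a*(1 - E*C)*(-2*E*S) + a*E*S*(2*L - 2*E*C) + b*(1 - E*C)*(2*E*C - 2*L) + b*E*S*(-2*E*S) + l*(1 - L)*(2*E*S)"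
  and h3: "T3 = -2*b + 2*a*E*S + 2*b*E*C"
  assumes t2: "T2 \<noteq> 0" and d: "2*b + T3*t \<noteq> 0" and ht: "t = T1/T2" and hp: "p = 2*E*S/(2*b + T3*t)"
  shows "(L - p * l * (t*L + 1 - t)) + p * (1 - t) * a = E*C*(1 - p*t*a) + E*S*(p*t*b)"
    and "p * (1 - t) * b = E*S*(1 - p*t*a) - E*C*(p*t*b)"
proof -
  have et: "t*T2 = T1" using ht t2 by simp
  have ep: "p*(2*b + T3*t) = 2*E*S" using hp d by simp
  have "((L - p * l * (t*L + 1 - t)) + p * (1 - t) * a - (E*C*(1 - p*t*a) + E*S*(p*t*b))) * (2*b + T3*t) * T2 = 0"
    using et ep unfolding h1 h2 h3 by algebra
  then show "(L - p * l * (t*L + 1 - t)) + p * (1 - t) * a = E*C*(1 - p*t*a) + E*S*(p*t*b)"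
    using d t2 by simp
  have "(p * (1 - t) * b - (E*S*(1 - p*t*a) - E*C*(p*t*b))) * (2*b + T3*t) * T2 = 0"
    using et ep unfolding h1 h2 h3 by algebra
  then show "p * (1 - t) * b = E*S*(1 - p*t*a) - E*C*(p*t*b)"
    using d t2 by simp
qed

definition mu :: "real \<Rightarrow> real \<Rightarrow> real \<Rightarrow> 3 \<Rightarrow> complex" where
  "mu a b l i = (if i = 1 then Complex a b else if i = 2 then Complex a (-b) else complex_of_real l)"

lemma J1_mult: "(J1 a b l *v x) $ i = mu a b l i * x $ i"
  using exhaust_3[of i] by (auto simp: J1_def matrix_vector_mult_def sum_3 mu_def)

lemma key:
  fixes a b l h :: real
  assumes t2: "T2 a b l h \<noteq> 0" and d: "2*b + T3 a b l h * theta a b l h \<noteq> 0"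
  shows "of_real (psi a b l h) + of_real (phi a b l h) * (1 - of_real (theta a b l h)) * mu a b l i
     = exp (mu a b l i * of_real h) * (1 - of_real (phi a b l h) * of_real (theta a b l h) * mu a b l i)"
proof -
  define p where "p = phi a b l h"
  define t where "t = theta a b l h"
  define q where "q = psi a b l h"
  have q: "q = exp (l*h) - p * l * (t * exp (l*h) + 1 - t)"
    unfolding q_def p_def t_def psi_def by simp
  have A: "q + p * (1 - t) * a = exp (a*h) * cos (b*h) * (1 - p*t*a) + exp (a*h) * sin (b*h) * (p*t*b)"
    and B: "p * (1 - t) * b = exp (a*h) * sin (b*h) * (1 - p*t*a) - exp (a*h) * cos (b*h) * (p*t*b)"
    unfolding q
    by (rule alg[OF T1_def T2_def T3_def t2 d[folded t_def] t_def[unfolded theta_def] p_def[unfolded phi_def, folded t_def]])+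
  have e1: "of_real q + of_real p * (1 - of_real t) * Complex a b
     = exp (Complex a b * of_real h) * (1 - of_real p * of_real t * Complex a b)"
  proof -
    have "Complex a b * of_real h = Complex (a*h) (b*h)"
      by (simp add: complex_eq_iff)
    then have ex: "exp (Complex a b * of_real h) = Complex (exp (a*h) * cos (b*h)) (exp (a*h) * sin (b*h))"
      by (simp only: exp_Complex) (simp add: complex_eq_iff)
    show ?thesis unfolding ex using A B
      by (simp add: complex_eq_iff algebra_simps)
  qed
  have e2: "of_real q + of_real p * (1 - of_real t) * Complex a (-b)
     = exp (Complex a (-b) * of_real h) * (1 - of_real p * of_real t * Complex a (-b))"
  proof -
    have "cnj (of_real q + of_real p * (1 - of_real t) * Complex a b)
     = cnj (exp (Complex a b * of_real h) * (1 - of_real p * of_real t * Complex a b))"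
      by (simp only: e1)
    moreover have "cnj (Complex a b) = Complex a (-b)" by (simp add: complex_eq_iff)
    ultimately show ?thesis by (simp add: exp_cnj)
  qed
  have e3: "of_real q + of_real p * (1 - of_real t) * complex_of_real l
     = exp (complex_of_real l * of_real h) * (1 - of_real p * of_real t * complex_of_real l)"
  proof -
    have "q + p * (1 - t) * l = exp (l*h) * (1 - p*t*l)" unfolding q by (simp add: algebra_simps)
    then have "complex_of_real (q + p * (1 - t) * l) = of_real (exp (l*h) * (1 - p*t*l))" by simp
    then show ?thesis by (simp add: exp_of_real[symmetric])
  qed
  show ?thesis using e1 e2 e3 unfolding mu_def p_def[symmetric] t_def[symmetric] q_def[symmetric]
    by auto
qed

lemma sc: "(c *\<^sub>R v) $ i = of_real c * (v $ i :: complex)"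
  by (subst vector_scaleR_component) (simp add: scaleR_conv_of_real)

lemma step_comp:
  assumes that: "p \<noteq> 0" and "scheme_step (J1 a b l) t p q x x'"
  shows "x' $ i - of_real q * x $ i = of_real p * mu a b l i * (of_real t * x' $ i + (1 - of_real t) * x $ i)"
proof -
  from assms(2) have "((1/p) *\<^sub>R (x' - q *\<^sub>R x)) $ i = (J1 a b l *v (t *\<^sub>R x' + (1 - t) *\<^sub>R x)) $ i"
    unfolding scheme_step_def by simp
  then have "of_real (1/p) * (x' $ i - of_real q * x $ i) = mu a b l i * (of_real t * x' $ i + (1 - of_real t) * x $ i)"
    by (simp only: J1_mult sc vector_minus_component vector_add_component of_real_diff of_real_1)
  then have "of_real p * (of_real (1/p) * (x' $ i - of_real q * x $ i)) = of_real p * (mu a b l i * (of_real t * x' $ i + (1 - of_real t) * x $ i))"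
    by simp
  moreover have "of_real p * (of_real (1/p) :: complex) = 1" using that
    by (simp flip: of_real_mult)
  ultimately show ?thesis using that by (simp add: mult.assoc[symmetric])
qed

lemma comp_step_iff:
  assumes "p \<noteq> 0"
  shows "scheme_step (J1 a b l) t p q x x' \<longleftrightarrow>
   (\<forall>i. x' $ i - of_real q * x $ i = of_real p * mu a b l i * (of_real t * x' $ i + (1 - of_real t) * x $ i))"
proof
  assume "scheme_step (J1 a b l) t p q x x'"
  then show "\<forall>i. x' $ i - of_real q * x $ i = of_real p * mu a b l i * (of_real t * x' $ i + (1 - of_real t) * x $ i)"
    using step_comp assms by blast
next
  assume H: "\<forall>i. x' $ i - of_real q * x $ i = of_real p * mu a b l i * (of_real t * x' $ i + (1 - of_real t) * x $ i)"
  have "of_real (1/p) * (x' $ i - of_real q * x $ i) = mu a b l i * (of_real t * x' $ i + (1 - of_real t) * x $ i)" for i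
  proof -
    have "of_real (1/p) * (x' $ i - of_real q * x $ i) = of_real (1/p) * of_real p * (mu a b l i * (of_real t * x' $ i + (1 - of_real t) * x $ i))"
      using H by (simp add: mult.assoc)
    also have "of_real (1/p) * of_real p = (1::complex)" using assms by (simp flip: of_real_mult)
    finally show ?thesis by simp
  qed
  then show "scheme_step (J1 a b l) t p q x x'"
    unfolding scheme_step_def vec_eq_iff by (simp only: J1_mult sc vector_minus_component vector_add_component of_real_diff of_real_1) blast
qed

lemma ode_comp:
  assumes "\<forall>t. (X has_vector_derivative (J1 a b l *v X t)) (at t)"
  shows "X s $ i = exp (mu a b l i * of_real s) * X 0 $ i"
proof -
  define c where "c = mu a b l i"
  define g where "g = (\<lambda>s::real. exp (-(c * of_real s)) * X s $ i)"
  have "(g has_vector_derivative 0) (at s within UNIV)" for s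
  proof -
    have d1: "((\<lambda>s. X s $ i) has_vector_derivative (c * X s $ i)) (at s)"
      using bounded_linear.has_vector_derivative[OF bounded_linear_vec_nth assms[rule_format, of s], of i]
      by (simp add: J1_mult c_def)
    have "((\<lambda>z. exp (-(c * z))) has_field_derivative (exp (-(c * of_real s)) * (-c))) (at (of_real s))"
      by (auto intro!: derivative_eq_intros)
    then have d2: "((\<lambda>s. exp (-(c * of_real s))) has_vector_derivative (exp (-(c * of_real s)) * (-c))) (at s)"
      by (rule has_vector_derivative_real_field)
    have "(g has_vector_derivative (exp (-(c * of_real s)) * (c * X s $ i) + exp (-(c * of_real s)) * (-c) * X s $ i)) (at s)"
      unfolding g_def by (rule has_vector_derivative_mult[OF d2 d1])
    then show ?thesis by (simp add: algebra_simps)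
  qed
  then obtain k where k: "\<And>s. s \<in> UNIV \<Longrightarrow> g s = k"
    using has_vector_derivative_zero_constant[of UNIV g] by blast
  have "g s = g 0" using k by simp
  then have "exp (-(c * of_real s)) * X s $ i = X 0 $ i" by (simp add: g_def)
  then have "exp (c * of_real s) * (exp (-(c * of_real s)) * X s $ i) = exp (c * of_real s) * X 0 $ i" by simp
  then show ?thesis by (simp add: c_def mult.assoc[symmetric] exp_minus_inverse)
qed

theorem corollary1:
  fixes \<alpha> \<beta> l h :: real
  assumes "\<beta> \<noteq> 0" and "h > 0"
    and "T2 \<alpha> \<beta> l h \<noteq> 0"
    and "2*\<beta> + T3 \<alpha> \<beta> l h * theta \<alpha> \<beta> l h \<noteq> 0"
    and "phi \<alpha> \<beta> l h \<noteq> 0"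
    and "\<forall>x. \<exists>!x'. scheme_step (J1 \<alpha> \<beta> l) (theta \<alpha> \<beta> l h) (phi \<alpha> \<beta> l h) (psi \<alpha> \<beta> l h) x x'"
  shows "exact_scheme (J1 \<alpha> \<beta> l) h (theta \<alpha> \<beta> l h) (phi \<alpha> \<beta> l h) (psi \<alpha> \<beta> l h)"
proof -
  define p where "p = phi \<alpha> \<beta> l h"
  define t where "t = theta \<alpha> \<beta> l h"
  define q where "q = psi \<alpha> \<beta> l h"
  define m where "m = mu \<alpha> \<beta> l"
  have p0: "p \<noteq> 0" using assms(5) p_def by simp
  have K: "of_real q + of_real p * (1 - of_real t) * m i = exp (m i * of_real h) * (1 - of_real p * of_real t * m i)" for i
    using key[OF assms(3,4), of i] unfolding p_def t_def q_def m_def .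
  have U: "\<forall>x. \<exists>!x'. scheme_step (J1 \<alpha> \<beta> l) t p q x x'" using assms(6) unfolding p_def t_def q_def .
  have NZ: "1 - of_real p * of_real t * m i \<noteq> 0" for i
  proof
    assume z: "1 - of_real p * of_real t * m i = 0"
    have s1: "scheme_step (J1 \<alpha> \<beta> l) t p q 0 0"
      using comp_step_iff[OF p0] by simp
    have s2: "scheme_step (J1 \<alpha> \<beta> l) t p q 0 (axis i 1)"
      unfolding comp_step_iff[OF p0]
    proof
      fix j
      show "axis i 1 $ j - of_real q * (0::complex^3) $ j = of_real p * mu \<alpha> \<beta> l j * (of_real t * axis i 1 $ j + (1 - of_real t) * (0::complex^3) $ j)"
      proof (cases "j = i")
        case True
        then show ?thesis using z by (simp add: axis_def m_def algebra_simps)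
      next
        case False
        then show ?thesis by (simp add: axis_def)
      qed
    qed
    have "axis i (1::complex) \<noteq> 0" by (simp add: axis_eq_0_iff)
    then show False using U s1 s2 by blast
  qed
  have STEP: "x' $ i = exp (m i * of_real h) * x $ i" if "scheme_step (J1 \<alpha> \<beta> l) t p q x x'" for x x' i
  proof -
    have e: "x' $ i - of_real q * x $ i = of_real p * m i * (of_real t * x' $ i + (1 - of_real t) * x $ i)"
      using that comp_step_iff[OF p0] unfolding m_def by blast
    have "x' $ i * (1 - of_real p * of_real t * m i) = x $ i * (of_real q + of_real p * (1 - of_real t) * m i)"
      using e by (simp add: algebra_simps)
    also have "\<dots> = (exp (m i * of_real h) * x $ i) * (1 - of_real p * of_real t * m i)"
      unfolding K by (simp add: algebra_simps)
    finally show ?thesis using NZ[of i] by simp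
  qed
  show ?thesis
    unfolding exact_scheme_def p_def[symmetric] t_def[symmetric] q_def[symmetric]
  proof (intro allI impI)
    fix xs :: "nat \<Rightarrow> complex^3" and X :: "real \<Rightarrow> complex^3" and k
    assume st: "\<forall>k. scheme_step (J1 \<alpha> \<beta> l) t p q (xs k) (xs (Suc k))"
      and x0: "X 0 = xs 0"
      and de: "\<forall>t. (X has_vector_derivative J1 \<alpha> \<beta> l *v X t) (at t)"
    have "xs k $ i = exp (m i * of_real (real k * h)) * xs 0 $ i" for i
    proof (induction k)
      case 0
      then show ?case by simp
    next
      case (Suc k)
      have "xs (Suc k) $ i = exp (m i * of_real h) * xs k $ i" using STEP st by blast
      also have "\<dots> = exp (m i * of_real h) * exp (m i * of_real (real k * h)) * xs 0 $ i"
        using Suc by (simp add: mult.assoc)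
      also have "exp (m i * of_real h) * exp (m i * of_real (real k * h)) = exp (m i * of_real (real (Suc k) * h))"
        by (simp add: exp_add[symmetric] algebra_simps)
      finally show ?case .
    qed
    then show "xs k = X (real k * h)"
      using ode_comp[OF de] x0 unfolding vec_eq_iff m_def by simp
  qed
qed

end
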